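(* Let $T$ be a triangle and $n$ a positive integer. Then there exists $\varepsilon_0>0$ such that for every $0<\varepsilon<\varepsilon_0$ there exists a point set $P\subseteq\mathbb{R}^2$ with $|P|\le 20$ such that $\mathcal{H}(T,P,\varepsilon)$ has complete shadow graph and $$h(n,T)\le n^3\,\lambda(\mathcal{H}(T,P,\varepsilon)).$$
   Context: For a triangle $T$ with side lengths $a,b,c$ and $\varepsilon>0$, with $\varepsilon'=\varepsilon\min\{a,b,c\}$, a triangle $A'B'C'$ is $\varepsilon$-congruent to $T$ if there are $A,B,C\in\mathbb{R}^2$ with $ABC$ congruent to $T$ and $A',B',C'$ within distance $\varepsilon'$ of $A,B,C$ respectively. $h(n,T,\varepsilon)$ is the maximum over $n$-point sets $P\subseteq\mathbb{R}^2$ of the number of 3-subsets of $P$ forming triangles $\varepsilon$-congruent to $T$, and $h(n,T)=\min_{\varepsilon>0}h(n,T,\varepsilon)$. For finite $P$, $\mathcal{H}(T,P,\varepsilon)$ is the 3-uniform hypergraph on $P$ whose edges are the triples forming triangles $\varepsilon$-congruent to $T$. The shadow graph of a 3-graph $H$ is the graph on $V(H)$ whose edges are the pairs contained in some edge of $H$; it is complete if all pairs are edges. For a 3-graph $H$ on vertices $1,\dots,m$, its Lagrangian is $\lambda(H)=\max\{\sum_{ijk\in E(H)}x_ix_jx_k : x\in[0,1]^m,\ x_1+\dots+x_m=1\}$. *)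

theory Defs
  imports "HOL-Analysis.Analysis"
begin

type_synonym pt = "real^2"

text \<open>A triangle T is given by its side lengths (a,b,c); we require a nondegenerate
  triangle: positive sides satisfying the strict triangle inequalities.\<close>
definition is_triangle :: "real \<times> real \<times> real \<Rightarrow> bool" where
  "is_triangle T \<longleftrightarrow> (case T of (a,b,c) \<Rightarrow>
     a > 0 \<and> b > 0 \<and> c > 0 \<and> a < b + c \<and> b < a + c \<and> c < a + b)"

definition congruent_to :: "real \<times> real \<times> real \<Rightarrow> pt \<Rightarrow> pt \<Rightarrow> pt \<Rightarrow> bool" where
  "congruent_to T A B C \<longleftrightarrow> (case T of (a,b,c) \<Rightarrow>
     dist B C = a \<and> dist C A = b \<and> dist A B = c)"

definition eps_congruent :: "real \<times> real \<times> real \<Rightarrow> real \<Rightarrow> pt \<Rightarrow> pt \<Rightarrow> pt \<Rightarrow> bool" where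
  "eps_congruent T \<epsilon> A' B' C' \<longleftrightarrow> (case T of (a,b,c) \<Rightarrow>
     (\<exists>A B C. congruent_to T A B C \<and>
        dist A' A \<le> \<epsilon> * min a (min b c) \<and>
        dist B' B \<le> \<epsilon> * min a (min b c) \<and>
        dist C' C \<le> \<epsilon> * min a (min b c)))"

definition H_edges :: "real \<times> real \<times> real \<Rightarrow> pt set \<Rightarrow> real \<Rightarrow> pt set set" where
  "H_edges T P \<epsilon> = {S. S \<subseteq> P \<and> card S = 3 \<and>
     (\<exists>A' B' C'. S = {A', B', C'} \<and> eps_congruent T \<epsilon> A' B' C')}"

definition h_eps :: "nat \<Rightarrow> real \<times> real \<times> real \<Rightarrow> real \<Rightarrow> nat" where
  "h_eps n T \<epsilon> = Max {card (H_edges T P \<epsilon>) | P. finite P \<and> card P = n}"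

definition h :: "nat \<Rightarrow> real \<times> real \<times> real \<Rightarrow> nat" where
  "h n T = Inf {h_eps n T \<epsilon> | \<epsilon>. \<epsilon> > 0}"

definition shadow_complete :: "'a set \<Rightarrow> 'a set set \<Rightarrow> bool" where
  "shadow_complete V E \<longleftrightarrow>
     (\<forall>u\<in>V. \<forall>v\<in>V. u \<noteq> v \<longrightarrow> (\<exists>e\<in>E. u \<in> e \<and> v \<in> e))"

definition lagrangian :: "'a set \<Rightarrow> 'a set set \<Rightarrow> real" where
  "lagrangian V E = Sup {(\<Sum>e\<in>E. \<Prod>v\<in>e. x v) | x.
      (\<forall>v\<in>V. 0 \<le> x v \<and> x v \<le> 1) \<and> (\<Sum>v\<in>V. x v) = 1}"

end

theory Submission
  imports Defs
begin


lemma norm2_cart: "(norm (v::real^2))^2 = (v$1)^2 + (v$2)^2"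
  unfolding power2_norm_eq_inner inner_vec_def sum_2 by (simp add: power2_eq_square)

lemma sq_same_sign:
  fixes C C' :: real assumes "0 \<le> C * C'"
  shows "(C - C')^2 \<le> \<bar>C^2 - C'^2\<bar>"
proof -
  have h: "\<bar>C - C'\<bar> \<le> \<bar>C + C'\<bar>" using assms
    by (smt (verit) mult_nonneg_nonpos2 mult_nonpos_nonpos zero_le_mult_iff)
  have "(C - C')^2 = \<bar>C - C'\<bar> * \<bar>C - C'\<bar>" by (simp add: power2_eq_square)
  also have "\<dots> \<le> \<bar>C - C'\<bar> * \<bar>C + C'\<bar>" by (rule mult_left_mono) (use h in auto)
  also have "\<dots> = \<bar>C^2 - C'^2\<bar>" by (simp add: abs_mult[symmetric] power2_eq_square algebra_simps)
  finally show ?thesis .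
qed

lemma geom_core:
  fixes ua ub wa wb za zb ra rb \<delta> M m dd :: real
  assumes dd: "dd = ua^2 + ub^2"
    and Nw1: "(ra-\<delta>)^2 \<le> wa^2+wb^2" and Nw2: "wa^2+wb^2 \<le> (ra+\<delta>)^2"
    and Nz1: "(ra-\<delta>)^2 \<le> za^2+zb^2" and Nz2: "za^2+zb^2 \<le> (ra+\<delta>)^2"
    and Nwu1: "(rb-\<delta>)^2 \<le> (wa-ua)^2+(wb-ub)^2" and Nwu2: "(wa-ua)^2+(wb-ub)^2 \<le> (rb+\<delta>)^2"
    and Nzu1: "(rb-\<delta>)^2 \<le> (za-ua)^2+(zb-ub)^2" and Nzu2: "(za-ua)^2+(zb-ub)^2 \<le> (rb+\<delta>)^2"
    and side: "(ua*wb - ub*wa \<ge> 0) = (ua*zb - ub*za \<ge> 0)"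
    and m: "0 < m" and mM: "m \<le> M" and ra: "0 \<le> ra" "ra \<le> M" and rb: "0 \<le> rb" "rb \<le> M"
    and d0: "0 \<le> \<delta>" and dm: "\<delta> \<le> m" and ddm: "m^2/4 \<le> dd"
    and small: "400 * M^2 * \<delta> < m^3"
  shows "(wa-za)^2 + (wb-zb)^2 < m^2/4"
proof -
  define D where "D = ua*wa + ub*wb"
  define D' where "D' = ua*za + ub*zb"
  define C where "C = ua*wb - ub*wa"
  define C' where "C' = ua*zb - ub*za"
  define Nw where "Nw = wa^2+wb^2"
  define Nz where "Nz = za^2+zb^2"
  define W where "W = (wa-za)^2 + (wb-zb)^2"
  have M0: "0 < M" using m mM by linarith
  have id1: "D^2 + C^2 = dd * Nw" unfolding D_def C_def dd Nw_def by algebra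
  have id1': "D'^2 + C'^2 = dd * Nz" unfolding D'_def C'_def dd Nz_def by algebra
  have id2: "2*(D - D') = (Nw - Nz) - (((wa-ua)^2+(wb-ub)^2) - ((za-ua)^2+(zb-ub)^2))"
    unfolding D_def D'_def Nw_def Nz_def by algebra
  have id3: "dd * W = (D-D')^2 + (C-C')^2"
    unfolding D_def D'_def C_def C'_def W_def dd by algebra
  have e1: "(ra+\<delta>)^2 - (ra-\<delta>)^2 = 4*ra*\<delta>" "(rb+\<delta>)^2 - (rb-\<delta>)^2 = 4*rb*\<delta>"
    by (simp_all add: power2_eq_square algebra_simps)
  have "ra*\<delta> \<le> M*\<delta>" "rb*\<delta> \<le> M*\<delta>" using ra rb d0 by (simp_all add: mult_right_mono)
  hence dNw: "\<bar>Nw - Nz\<bar> \<le> 4*M*\<delta>" and dD: "\<bar>D - D'\<bar> \<le> 4*M*\<delta>"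
    using id2 e1 Nw1 Nw2 Nz1 Nz2 Nwu1 Nwu2 Nzu1 Nzu2 unfolding Nw_def Nz_def by auto
  define d where "d = sqrt dd"
  have dd0: "0 \<le> dd" proof - have "0 \<le> m^2/4" by simp thus ?thesis using ddm by linarith qed
  have dsq: "d^2 = dd" "d * d = dd" using dd0 by (simp_all add: d_def)
  have dpos: "m/2 \<le> d" unfolding d_def
    by (rule real_le_rsqrt) (use ddm in \<open>simp add: power_divide\<close>)
  have "(ra+\<delta>)^2 \<le> (M+\<delta>)^2" using ra d0 by (intro power_mono) auto
  hence Nwle: "Nw \<le> (M+\<delta>)^2" and Nzle: "Nz \<le> (M+\<delta>)^2"
    using Nw2 Nz2 unfolding Nw_def Nz_def by linarith+
  have X0: "0 \<le> d*(M+\<delta>)" using dpos m d0 M0 by simp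
  have "D^2 \<le> (d*(M+\<delta>))^2"
  proof -
    have "D^2 \<le> dd * Nw" using id1 by (smt (verit) zero_le_power2)
    also have "\<dots> \<le> dd * (M+\<delta>)^2" using Nwle dd0 by (simp add: mult_left_mono)
    finally show ?thesis by (simp add: power_mult_distrib dsq)
  qed
  hence aD: "\<bar>D\<bar> \<le> d*(M+\<delta>)" using abs_le_square_iff[of D "d*(M+\<delta>)"] X0 by simp
  have "D'^2 \<le> (d*(M+\<delta>))^2"
  proof -
    have "D'^2 \<le> dd * Nz" using id1' by (smt (verit) zero_le_power2)
    also have "\<dots> \<le> dd * (M+\<delta>)^2" using Nzle dd0 by (simp add: mult_left_mono)
    finally show ?thesis by (simp add: power_mult_distrib dsq)
  qed
  hence aD': "\<bar>D'\<bar> \<le> d*(M+\<delta>)" using abs_le_square_iff[of D' "d*(M+\<delta>)"] X0 by simp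
  have idC: "C^2 - C'^2 = dd*(Nw - Nz) - (D-D')*(D+D')"
    using id1 id1' by (simp add: power2_eq_square algebra_simps)
  have t1: "\<bar>dd*(Nw - Nz)\<bar> \<le> dd*(4*M*\<delta>)" using dNw dd0 by (simp add: abs_mult mult_left_mono)
  have t2: "\<bar>(D-D')*(D+D')\<bar> \<le> (4*M*\<delta>) * (2*(d*(M+\<delta>)))"
    unfolding abs_mult using dD aD aD' by (intro mult_mono) auto
  have aC: "\<bar>C^2 - C'^2\<bar> \<le> dd*(4*M*\<delta>) + (4*M*\<delta>) * (2*(d*(M+\<delta>)))"
    using idC t1 t2 by linarith
  have sd: "(C \<ge> 0) = (C' \<ge> 0)" using side by (simp add: C_def C'_def)
  have CC: "0 \<le> C * C'" using sd by (cases "C \<ge> 0") (auto intro: mult_nonneg_nonneg mult_nonpos_nonpos)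
  have dC: "(C-C')^2 \<le> \<bar>C^2 - C'^2\<bar>" by (rule sq_same_sign[OF CC])
  have dD2: "(D-D')^2 \<le> (4*M*\<delta>)^2" using abs_le_square_iff[of "D-D'" "4*M*\<delta>"] dD M0 d0 by simp
  have main: "dd * W \<le> (4*M*\<delta>)^2 + dd*(4*M*\<delta>) + (4*M*\<delta>) * (2*(d*(M+\<delta>)))"
    using id3 dD2 dC aC by linarith
  have b1: "(4*M*\<delta>)^2 \<le> dd * (64*M^2*\<delta>/m)"
  proof -
    have "(4*M*\<delta>)^2 = 16*M^2*\<delta>*\<delta>" by (simp add: power2_eq_square)
    also have "\<dots> \<le> 16*M^2*\<delta>*m" using dm d0 by (simp add: mult_left_mono)
    also have "\<dots> = (m^2/4) * (64*M^2*\<delta>/m)" using m by (simp add: power2_eq_square field_simps)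
    also have "\<dots> \<le> dd * (64*M^2*\<delta>/m)" using ddm m d0 by (intro mult_right_mono) auto
    finally show ?thesis .
  qed
  have b2: "(4*M*\<delta>) * (2*(d*(M+\<delta>))) \<le> dd * (32*M^2*\<delta>/m)"
  proof -
    have "(4*M*\<delta>) * (2*(d*(M+\<delta>))) = d * (8*M*\<delta>*(M+\<delta>))" by (simp add: algebra_simps)
    also have "\<dots> \<le> d * (16*M*M*\<delta>)"
    proof -
      have "M + \<delta> \<le> 2*M" using dm mM by linarith
      hence "8*M*\<delta>*(M+\<delta>) \<le> 8*M*\<delta>*(2*M)" using M0 d0 by (intro mult_left_mono) auto
      thus ?thesis using dpos m by (intro mult_left_mono) (auto simp: algebra_simps)
    qed
    also have "\<dots> = d * ((m/2) * (32*M^2*\<delta>/m))" using m by (simp add: power2_eq_square field_simps)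
    also have "\<dots> \<le> d * (d * (32*M^2*\<delta>/m))" using dpos m d0
      by (intro mult_left_mono mult_right_mono) auto
    finally show ?thesis by (simp add: dsq mult.assoc[symmetric])
  qed
  have b3: "dd*(4*M*\<delta>) \<le> dd*(4*M^2*\<delta>/m)"
  proof -
    have "4*M*\<delta> = 4*M*\<delta>*m/m" using m by simp
    also have "\<dots> \<le> 4*M*\<delta>*M/m" using mM M0 d0 m by (intro divide_right_mono mult_left_mono) auto
    also have "\<dots> = 4*M^2*\<delta>/m" by (simp add: power2_eq_square)
    finally show ?thesis using dd0 by (intro mult_left_mono) auto
  qed
  have "dd * W \<le> dd * (100*M^2*\<delta>/m)"
  proof -
    have eqq: "dd*(64*M^2*\<delta>/m) + dd*(4*M^2*\<delta>/m) + dd*(32*M^2*\<delta>/m) = dd*(100*M^2*\<delta>/m)"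
      using m by (simp add: field_simps)
    have lee: "dd * W \<le> dd*(64*M^2*\<delta>/m) + dd*(4*M^2*\<delta>/m) + dd*(32*M^2*\<delta>/m)"
      by (rule order_trans[OF main]) (intro add_mono b1 b2 b3)
    show ?thesis using lee eqq by (rule ord_le_eq_trans)
  qed
  also have "\<dots> < dd * (m^2/4)"
  proof -
    have "100*M^2*\<delta>/m < m^2/4" using small m by (simp add: field_simps power2_eq_square power3_eq_cube)
    moreover have "0 < dd" proof - have "0 < m^2/4" using m by simp thus ?thesis using ddm by linarith qed
    ultimately show ?thesis by (rule mult_strict_left_mono)
  qed
  finally have "dd * W < dd * (m^2/4)" .
  hence "W < m^2/4" using dd0 by (rule mult_left_less_imp_less)
  thus ?thesis unfolding W_def .
qed



lemma dist_diff_le: "\<bar>dist x' y' - dist x y\<bar> \<le> dist x' x + dist y' y"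
proof -
  have "dist x' y' \<le> dist x' x + dist x y + dist y y'"
    by (metis add.commute add_le_cancel_left dist_triangle order_trans)
  moreover have "dist x y \<le> dist x x' + dist x' y' + dist y' y"
    by (metis add.commute add_le_cancel_left dist_triangle order_trans)
  ultimately show ?thesis by (simp add: dist_commute)
qed

lemma eps_pair:
  assumes "eps_congruent (a,b,c) \<epsilon> A' B' C'" "u \<in> {A',B',C'}" "w \<in> {A',B',C'}" "u \<noteq> w"
  shows "\<exists>k\<in>{a,b,c}. \<bar>dist u w - k\<bar> \<le> 2*\<epsilon>*min a (min b c)"
proof -
  define e where "e = \<epsilon>*min a (min b c)"
  obtain A B C where cg: "dist B C = a" "dist C A = b" "dist A B = c"
    and d: "dist A' A \<le> e" "dist B' B \<le> e" "dist C' C \<le> e"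
    using assms(1) unfolding eps_congruent_def congruent_to_def e_def by auto
  have 1: "\<bar>dist B' C' - a\<bar> \<le> 2*e" using dist_diff_le[of B' C' B C] cg d by linarith
  have 2: "\<bar>dist C' A' - b\<bar> \<le> 2*e" using dist_diff_le[of C' A' C A] cg d by linarith
  have 3: "\<bar>dist A' B' - c\<bar> \<le> 2*e" using dist_diff_le[of A' B' A B] cg d by linarith
  have "\<exists>k\<in>{a,b,c}. \<bar>dist u w - k\<bar> \<le> 2*e"
    using assms(2-4) 1 2 3 by (auto simp: dist_commute)
  thus ?thesis by (simp add: e_def mult.assoc)
qed

lemma sq_bounds:
  fixes x k \<delta> :: real
  assumes "\<bar>x - k\<bar> \<le> \<delta>" "0 \<le> k - \<delta>"
  shows "(k-\<delta>)^2 \<le> x^2" "x^2 \<le> (k+\<delta>)^2"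
  using assms by (auto intro!: power_mono)

lemma card3: "card {a,b,c} \<le> 3"
  by (auto simp: card_insert_if)

lemma card_bound:
  fixes S :: "pt set" and a b c \<delta> :: real
  assumes fin: "finite S"
   and pos: "0<a" "0<b" "0<c"
   and dst: "\<And>u w. u\<in>S \<Longrightarrow> w\<in>S \<Longrightarrow> u\<noteq>w \<Longrightarrow> \<exists>k\<in>{a,b,c}. \<bar>dist u w - k\<bar> \<le> \<delta>"
   and d0: "0 \<le> \<delta>" and small: "400 * (max a (max b c))^2 * \<delta> < (min a (min b c))^3"
  shows "card S \<le> 20"
proof (cases "card S \<le> 2")
  case True thus ?thesis by simp
next
  case False
  define m where "m = min a (min b c)"
  define M where "M = max a (max b c)"
  define R where "R = {a,b,c}"
  have m0: "0 < m" using pos by (simp add: m_def)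
  have mM: "m \<le> M" by (simp add: m_def M_def)
  have kR: "\<And>k. k \<in> R \<Longrightarrow> m \<le> k \<and> k \<le> M" by (auto simp: R_def m_def M_def)
  have M0: "0 < M" using m0 mM by linarith
  have "m^3 \<le> M^2 * m" using m0 mM by (simp add: power3_eq_cube power2_eq_square mult_mono)
  hence "M^2 * (400*\<delta>) < M^2 * m" using small unfolding m_def[symmetric] M_def[symmetric] by (simp add: algebra_simps)
  hence "400*\<delta> < m" by (rule mult_left_less_imp_less) simp
  hence dm: "\<delta> \<le> m/2" "\<delta> \<le> m" using d0 by linarith+
  have far: "\<And>u w. u\<in>S \<Longrightarrow> w\<in>S \<Longrightarrow> u\<noteq>w \<Longrightarrow> m/2 \<le> dist u w"
  proof -
    fix u w assume "u\<in>S" "w\<in>S" "u\<noteq>w"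
    then obtain k where "k \<in> R" "\<bar>dist u w - k\<bar> \<le> \<delta>" using dst unfolding R_def by blast
    thus "m/2 \<le> dist u w" using kR[of k] dm by linarith
  qed
  obtain p where p: "p \<in> S" using False by fastforce
  have "card (S - {p}) \<ge> 2" using False p fin by (simp add: card_Diff_singleton)
  then obtain q where q: "q \<in> S" "q \<noteq> p"
    by (metis Diff_iff card.empty emptyE insertCI not_numeral_le_zero subsetI subset_antisym)
  define S0 where "S0 = S - {p,q}"
  have cS: "card S = card S0 + 2" using p q fin False unfolding S0_def
    by (subst card_Diff_subset) (auto simp: card_insert_if dest: card_mono[of S "{p,q}", OF fin])
  define cr where "cr = (\<lambda>r::pt. (q-p)$1 * (r-p)$2 - (q-p)$2 * (r-p)$1)"
  define f1 where "f1 = (\<lambda>r. SOME k. k \<in> R \<and> \<bar>dist p r - k\<bar> \<le> \<delta>)"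
  define f2 where "f2 = (\<lambda>r. SOME k. k \<in> R \<and> \<bar>dist q r - k\<bar> \<le> \<delta>)"
  define key where "key = (\<lambda>r. (f1 r, f2 r, cr r \<ge> 0))"
  have F1: "f1 r \<in> R \<and> \<bar>dist p r - f1 r\<bar> \<le> \<delta>" if "r \<in> S0" for r
    unfolding f1_def by (rule someI_ex) (use that dst[of p r] p in \<open>auto simp: S0_def R_def\<close>)
  have F2: "f2 r \<in> R \<and> \<bar>dist q r - f2 r\<bar> \<le> \<delta>" if "r \<in> S0" for r
    unfolding f2_def by (rule someI_ex) (use that dst[of q r] q in \<open>auto simp: S0_def R_def\<close>)
  have inj: "inj_on key S0"
  proof (rule inj_onI, rule ccontr)
    fix r r' assume r: "r \<in> S0" and r': "r' \<in> S0" and kk: "key r = key r'" and ne: "r \<noteq> r'"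
    have e1: "f1 r' = f1 r" "f2 r' = f2 r" and sd: "(cr r \<ge> 0) = (cr r' \<ge> 0)"
      using kk by (auto simp: key_def)
    have A1: "f1 r \<in> R" "\<bar>dist p r - f1 r\<bar> \<le> \<delta>" "\<bar>dist p r' - f1 r\<bar> \<le> \<delta>"
      using F1[OF r] F1[OF r'] e1 by auto
    have A2: "f2 r \<in> R" "\<bar>dist q r - f2 r\<bar> \<le> \<delta>" "\<bar>dist q r' - f2 r\<bar> \<le> \<delta>"
      using F2[OF r] F2[OF r'] e1 by auto
    have k1: "m \<le> f1 r" "f1 r \<le> M" using kR A1(1) by auto
    have k2: "m \<le> f2 r" "f2 r \<le> M" using kR A2(1) by auto
    have nrm2: "\<And>x y::pt. (dist x y)^2 = (x$1 - y$1)^2 + (x$2 - y$2)^2"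
      by (simp add: dist_norm norm2_cart)
    have nrm: "\<And>x y::pt. (dist x y)^2 = (y$1 - x$1)^2 + (y$2 - x$2)^2"
      by (metis nrm2 dist_commute)
    have "(dist r r')^2 < m^2/4"
    proof -
      have "((r-p)$1 - (r'-p)$1)^2 + ((r-p)$2 - (r'-p)$2)^2 < m^2/4"
      proof (rule geom_core[where dd = "(dist p q)^2" and ua = "(q-p)$1" and ub = "(q-p)$2"
            and ra = "f1 r" and rb = "f2 r" and \<delta> = \<delta> and M = M and m = m])
        show "(dist p q)^2 = ((q-p)$1)^2 + ((q-p)$2)^2" by (simp add: nrm)
        show "(f1 r - \<delta>)^2 \<le> ((r-p)$1)^2 + ((r-p)$2)^2"
             "((r-p)$1)^2 + ((r-p)$2)^2 \<le> (f1 r + \<delta>)^2"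
          using sq_bounds[OF A1(2)] k1 dm by (simp_all add: nrm)
        show "(f1 r - \<delta>)^2 \<le> ((r'-p)$1)^2 + ((r'-p)$2)^2"
             "((r'-p)$1)^2 + ((r'-p)$2)^2 \<le> (f1 r + \<delta>)^2"
          using sq_bounds[OF A1(3)] k1 dm by (simp_all add: nrm)
        show "(f2 r - \<delta>)^2 \<le> ((r-p)$1 - (q-p)$1)^2 + ((r-p)$2 - (q-p)$2)^2"
             "((r-p)$1 - (q-p)$1)^2 + ((r-p)$2 - (q-p)$2)^2 \<le> (f2 r + \<delta>)^2"
          using sq_bounds[OF A2(2)] k2 dm by (simp_all add: nrm)
        show "(f2 r - \<delta>)^2 \<le> ((r'-p)$1 - (q-p)$1)^2 + ((r'-p)$2 - (q-p)$2)^2"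
             "((r'-p)$1 - (q-p)$1)^2 + ((r'-p)$2 - (q-p)$2)^2 \<le> (f2 r + \<delta>)^2"
          using sq_bounds[OF A2(3)] k2 dm by (simp_all add: nrm)
        show "(0 \<le> (q-p)$1 * (r-p)$2 - (q-p)$2 * (r-p)$1) = (0 \<le> (q-p)$1 * (r'-p)$2 - (q-p)$2 * (r'-p)$1)"
          using sd by (simp add: cr_def)
        show "0 < m" "m \<le> M" "0 \<le> f1 r" "f1 r \<le> M" "0 \<le> f2 r" "f2 r \<le> M" "0 \<le> \<delta>" "\<delta> \<le> m"
          using m0 mM k1 k2 d0 dm by auto
        have "m/2 \<le> dist p q" using far[of p q] p q by auto
        hence "(m/2)^2 \<le> (dist p q)^2" using m0 by (intro power_mono) auto
        thus "m^2/4 \<le> (dist p q)^2" by (simp add: power_divide)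
        show "400 * M^2 * \<delta> < m^3" using small by (simp add: m_def M_def)
      qed
      thus ?thesis by (simp add: nrm2)
    qed
    moreover have "m/2 \<le> dist r r'" using far[of r r'] r r' ne by (auto simp: S0_def)
    hence "(m/2)^2 \<le> (dist r r')^2" using m0 by (intro power_mono) auto
    ultimately show False by (simp add: power_divide)
  qed
  have "key ` S0 \<subseteq> R \<times> R \<times> (UNIV :: bool set)"
    using F1 F2 by (auto simp: key_def)
  hence "card (key ` S0) \<le> card (R \<times> R \<times> (UNIV :: bool set))"
    by (intro card_mono) (auto simp: R_def)
  also have "\<dots> = card R * card R * 2" by (simp add: card_cartesian_product)
  also have "\<dots> \<le> 3 * 3 * 2" using card3[of a b c] unfolding R_def by (intro mult_mono) auto
  finally have "card S0 \<le> 18" using card_image[OF inj] by simp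
  thus ?thesis using cS by simp
qed



definition mv :: "('a \<Rightarrow> real) \<Rightarrow> 'a \<Rightarrow> 'a \<Rightarrow> 'a \<Rightarrow> real" where
  "mv y a b = y(a := y a + y b, b := 0)"

lemma edge_conv:
  fixes x :: "'a \<Rightarrow> real"
  assumes fe: "finite e" and uv: "u \<noteq> v" and nboth: "\<not> (u \<in> e \<and> v \<in> e)"
    and pos: "0 < x u + x v"
  shows "(\<Prod>w\<in>e. x w) = (x u / (x u + x v)) * (\<Prod>w\<in>e. mv x u v w)
          + (1 - x u / (x u + x v)) * (\<Prod>w\<in>e. mv x v u w)"
proof -
  define l where "l = x u / (x u + x v)"
  have l1: "1 - l = x v / (x u + x v)" using pos by (simp add: l_def field_simps)
  have main: "(\<Prod>w\<in>e. x w) = l * (\<Prod>w\<in>e. mv x u v w) + (x v / (x u + x v)) * (\<Prod>w\<in>e. mv x v u w)"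
  proof (cases "u \<in> e")
    case True
    hence ve: "v \<notin> e" using nboth by auto
    have a0: "(\<Prod>w\<in>e-{u}. mv x u v w) = (\<Prod>w\<in>e-{u}. x w)"
      using ve by (intro prod.cong) (auto simp: mv_def)
    have a: "(\<Prod>w\<in>e. mv x u v w) = (x u + x v) * (\<Prod>w\<in>e-{u}. x w)"
      using uv unfolding prod.remove[OF fe True] a0 by (simp add: mv_def)
    have b: "(\<Prod>w\<in>e. mv x v u w) = 0"
    proof -
      have "mv x v u u = 0" using uv by (simp add: mv_def)
      thus ?thesis using prod_zero[OF fe] True by blast
    qed
    have c: "(\<Prod>w\<in>e. x w) = x u * (\<Prod>w\<in>e-{u}. x w)" by (simp add: prod.remove[OF fe True])
    show ?thesis using pos unfolding a b c l_def by (simp add: field_simps)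
  next
    case False
    show ?thesis
    proof (cases "v \<in> e")
      case True
      have a0: "(\<Prod>w\<in>e-{v}. mv x v u w) = (\<Prod>w\<in>e-{v}. x w)"
        using False by (intro prod.cong) (auto simp: mv_def)
      have a: "(\<Prod>w\<in>e. mv x v u w) = (x v + x u) * (\<Prod>w\<in>e-{v}. x w)"
        using uv unfolding prod.remove[OF fe True] a0 by (simp add: mv_def)
      have b: "(\<Prod>w\<in>e. mv x u v w) = 0"
      proof -
        have "mv x u v v = 0" using uv by (simp add: mv_def)
        thus ?thesis using prod_zero[OF fe] True by blast
      qed
      have c: "(\<Prod>w\<in>e. x w) = x v * (\<Prod>w\<in>e-{v}. x w)" by (simp add: prod.remove[OF fe True])
      show ?thesis using pos unfolding a b c l_def by (simp add: field_simps)
    next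
      case ve: False
      have a: "(\<Prod>w\<in>e. mv x v u w) = (\<Prod>w\<in>e. x w)" "(\<Prod>w\<in>e. mv x u v w) = (\<Prod>w\<in>e. x w)"
        using ve False by (auto simp: mv_def intro!: prod.cong)
      have s1: "l + x v / (x u + x v) = 1" using pos by (simp add: l_def add_divide_distrib[symmetric])
      show ?thesis unfolding a distrib_right[symmetric] s1 by simp
    qed
  qed
  show ?thesis using main l1 by (simp add: l_def)
qed

lemma reduce:
  fixes G :: "'a set \<Rightarrow> 'a set set" and x :: "'a \<Rightarrow> real"
  assumes Gsub: "\<And>S S'. finite S \<Longrightarrow> S' \<subseteq> S \<Longrightarrow> G S' = {e\<in>G S. e \<subseteq> S'}"
   and Gfin: "\<And>S. finite S \<Longrightarrow> finite (G S)"
   and Gedge: "\<And>S e. finite S \<Longrightarrow> e \<in> G S \<Longrightarrow> e \<subseteq> S"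
  shows "finite S \<Longrightarrow> (\<forall>v\<in>S. 0 < x v) \<Longrightarrow> \<exists>S' x'. S' \<subseteq> S \<and> (\<forall>v\<in>S'. 0 < x' v)
     \<and> (\<Sum>v\<in>S'. x' v) = (\<Sum>v\<in>S. x v)
     \<and> (\<Sum>e\<in>G S. \<Prod>w\<in>e. x w) \<le> (\<Sum>e\<in>G S'. \<Prod>w\<in>e. x' w) \<and> shadow_complete S' (G S')"
proof (induction "card S" arbitrary: S x rule: less_induct)
  case less
  note fin = less.prems(1) and pos = less.prems(2)
  show ?case
  proof (cases "shadow_complete S (G S)")
    case True
    have "S \<subseteq> S \<and> (\<forall>v\<in>S. 0 < x v) \<and> (\<Sum>v\<in>S. x v) = (\<Sum>v\<in>S. x v)
     \<and> (\<Sum>e\<in>G S. \<Prod>w\<in>e. x w) \<le> (\<Sum>e\<in>G S. \<Prod>w\<in>e. x w) \<and> shadow_complete S (G S)"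
      using pos True by simp
    thus ?thesis by blast
  next
    case False
    then obtain u v where uv: "u \<in> S" "v \<in> S" "u \<noteq> v" and nb: "\<not> (\<exists>e\<in>G S. u \<in> e \<and> v \<in> e)"
      unfolding shadow_complete_def by blast
    have step: "?thesis" if ab: "a \<in> S" "b \<in> S" "a \<noteq> b"
      and le: "(\<Sum>e\<in>G S. \<Prod>w\<in>e. x w) \<le> (\<Sum>e\<in>G S. \<Prod>w\<in>e. mv x a b w)" for a b
    proof -
      define y where "y = mv x a b"
      define S1 where "S1 = S - {b}"
      have fin1: "finite S1" using fin by (simp add: S1_def)
      have c1: "card S1 < card S" using card_Diff1_less[OF fin ab(2)] by (simp add: S1_def)
      have pos1: "\<forall>v\<in>S1. 0 < y v" using pos ab by (auto simp: y_def mv_def S1_def add_pos_pos)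
      have sum1: "(\<Sum>v\<in>S1. y v) = (\<Sum>v\<in>S. x v)"
      proof -
        have "a \<in> S1" using ab by (simp add: S1_def)
        have "(\<Sum>v\<in>S. x v) = x b + (\<Sum>v\<in>S1. x v)" unfolding S1_def using sum.remove[OF fin ab(2), of x] .
        also have "(\<Sum>v\<in>S1. x v) = x a + (\<Sum>v\<in>S1-{a}. x v)" by (rule sum.remove[OF fin1 \<open>a \<in> S1\<close>])
        also have "(\<Sum>v\<in>S1. y v) = y a + (\<Sum>v\<in>S1-{a}. y v)" by (rule sum.remove[OF fin1 \<open>a \<in> S1\<close>])
        moreover have "(\<Sum>v\<in>S1-{a}. y v) = (\<Sum>v\<in>S1-{a}. x v)"
          by (rule sum.cong) (auto simp: y_def mv_def S1_def)
        moreover have "y a = x a + x b" using ab by (simp add: y_def mv_def)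
        ultimately show ?thesis by simp
      qed
      have f1: "(\<Sum>e\<in>G S. \<Prod>w\<in>e. y w) = (\<Sum>e\<in>G S1. \<Prod>w\<in>e. y w)"
      proof (rule sum.mono_neutral_right)
        show "finite (G S)" using Gfin fin .
        show "G S1 \<subseteq> G S" using Gsub[OF fin, of S1] by (auto simp: S1_def)
        show "\<forall>e\<in>G S - G S1. (\<Prod>w\<in>e. y w) = 0"
        proof
          fix e assume e: "e \<in> G S - G S1"
          have eS: "e \<subseteq> S" using Gedge fin e by blast
          have "\<not> e \<subseteq> S1" using e Gsub[OF fin, of S1] by (auto simp: S1_def)
          hence "b \<in> e" using eS by (auto simp: S1_def)
          moreover have "finite e" using eS fin finite_subset by blast
          moreover have "y b = 0" by (simp add: y_def mv_def)
          ultimately show "(\<Prod>w\<in>e. y w) = 0" using prod_zero by blast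
        qed
      qed
      obtain S' x' where r: "S' \<subseteq> S1" "\<forall>v\<in>S'. 0 < x' v" "(\<Sum>v\<in>S'. x' v) = (\<Sum>v\<in>S1. y v)"
        "(\<Sum>e\<in>G S1. \<Prod>w\<in>e. y w) \<le> (\<Sum>e\<in>G S'. \<Prod>w\<in>e. x' w)" "shadow_complete S' (G S')"
        using less.hyps[OF c1 fin1 pos1] by blast
      have "S' \<subseteq> S" using r(1) by (auto simp: S1_def)
      moreover have "(\<Sum>v\<in>S'. x' v) = (\<Sum>v\<in>S. x v)" using r(3) sum1 by simp
      moreover have "(\<Sum>e\<in>G S. \<Prod>w\<in>e. x w) \<le> (\<Sum>e\<in>G S'. \<Prod>w\<in>e. x' w)"
        using le r(4) f1 unfolding y_def by linarith
      ultimately show ?thesis using r(2) r(5) by blast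
    qed
    have pu: "0 < x u + x v" using pos uv by (simp add: add_pos_pos)
    define l where "l = x u / (x u + x v)"
    have l01: "0 \<le> l" "l \<le> 1" using pos uv pu by (auto simp: l_def)
    have conv: "(\<Sum>e\<in>G S. \<Prod>w\<in>e. x w) = l * (\<Sum>e\<in>G S. \<Prod>w\<in>e. mv x u v w)
        + (1 - l) * (\<Sum>e\<in>G S. \<Prod>w\<in>e. mv x v u w)"
    proof -
      have "(\<Sum>e\<in>G S. \<Prod>w\<in>e. x w) = (\<Sum>e\<in>G S. l * (\<Prod>w\<in>e. mv x u v w) + (1 - l) * (\<Prod>w\<in>e. mv x v u w))"
      proof (rule sum.cong)
        fix e assume e: "e \<in> G S"
        have "finite e" using Gedge[OF fin e] fin finite_subset by blast
        thus "(\<Prod>w\<in>e. x w) = l * (\<Prod>w\<in>e. mv x u v w) + (1 - l) * (\<Prod>w\<in>e. mv x v u w)"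
          unfolding l_def using edge_conv[of e u v x] uv nb e pu by blast
      qed simp
      thus ?thesis by (simp add: sum.distrib sum_distrib_left)
    qed
    show ?thesis
    proof (cases "(\<Sum>e\<in>G S. \<Prod>w\<in>e. mv x v u w) \<le> (\<Sum>e\<in>G S. \<Prod>w\<in>e. mv x u v w)")
      case True
      have "(\<Sum>e\<in>G S. \<Prod>w\<in>e. x w) \<le> (\<Sum>e\<in>G S. \<Prod>w\<in>e. mv x u v w)"
        proof -
        have "(1 - l) * (\<Sum>e\<in>G S. \<Prod>w\<in>e. mv x v u w) \<le> (1 - l) * (\<Sum>e\<in>G S. \<Prod>w\<in>e. mv x u v w)"
          using l01 True by (intro mult_left_mono) auto
        thus ?thesis unfolding conv by (simp add: algebra_simps)
      qed
      thus ?thesis by (rule step[OF uv(1,2,3)])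
    next
      case False
      have "(\<Sum>e\<in>G S. \<Prod>w\<in>e. x w) \<le> (\<Sum>e\<in>G S. \<Prod>w\<in>e. mv x v u w)"
        proof -
        have "l * (\<Sum>e\<in>G S. \<Prod>w\<in>e. mv x u v w) \<le> l * (\<Sum>e\<in>G S. \<Prod>w\<in>e. mv x v u w)"
          using l01 False by (intro mult_left_mono) auto
        thus ?thesis unfolding conv by (simp add: algebra_simps)
      qed
      thus ?thesis by (rule step[OF uv(2,1) uv(3)[symmetric]])
    qed
  qed
qed



theorem lemma3p1:
  fixes T :: "real \<times> real \<times> real" and n :: nat
  assumes "is_triangle T" and "n > 0"
  shows "\<exists>\<epsilon>0 > 0. \<forall>\<epsilon>. 0 < \<epsilon> \<and> \<epsilon> < \<epsilon>0 \<longrightarrow>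
           (\<exists>P :: pt set. finite P \<and> card P \<le> 20 \<and>
              shadow_complete P (H_edges T P \<epsilon>) \<and>
              real (h n T) \<le> real n ^ 3 * lagrangian P (H_edges T P \<epsilon>))"
proof -
  obtain a b c where T: "T = (a,b,c)" by (cases T) auto
  have pos: "0 < a" "0 < b" "0 < c" using assms(1) unfolding T is_triangle_def by auto
  define m where "m = min a (min b c)"
  define M where "M = max a (max b c)"
  have m0: "0 < m" using pos by (simp add: m_def)
  have mM: "m \<le> M" by (simp add: m_def M_def)
  have M0: "0 < M" using m0 mM by linarith
  define e0 where "e0 = m^2 / (1000 * M^2)"
  have e0pos: "0 < e0" using m0 M0 by (simp add: e0_def)
  have "\<forall>\<epsilon>. 0 < \<epsilon> \<and> \<epsilon> < e0 \<longrightarrow>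
           (\<exists>P :: pt set. finite P \<and> card P \<le> 20 \<and>
              shadow_complete P (H_edges T P \<epsilon>) \<and>
              real (h n T) \<le> real n ^ 3 * lagrangian P (H_edges T P \<epsilon>))"
  proof (intro allI impI)
    fix \<epsilon> :: real assume eps: "0 < \<epsilon> \<and> \<epsilon> < e0"
    define X where "X = {card (H_edges T P \<epsilon>) | P :: pt set. finite P \<and> card P = n}"
    have inf: "infinite (UNIV :: pt set)" by (rule infinite_UNIV_vec) (rule infinite_UNIV_char_0)
    obtain P0 :: "pt set" where "finite P0" "card P0 = n" using infinite_arbitrarily_large[OF inf] by blast
    hence Xne: "X \<noteq> {}" unfolding X_def by blast
    have Hpow: "H_edges T P \<epsilon> \<subseteq> Pow P" for P by (auto simp: H_edges_def)
    have Hfin: "finite P \<Longrightarrow> finite (H_edges T P \<epsilon>)" for P using Hpow finite_subset by blast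
    have "X \<subseteq> {..2^n}"
    proof
      fix k assume "k \<in> X"
      then obtain P :: "pt set" where P: "finite P" "card P = n" "k = card (H_edges T P \<epsilon>)" unfolding X_def by blast
      have "card (H_edges T P \<epsilon>) \<le> card (Pow P)" using Hpow P(1) by (intro card_mono) auto
      thus "k \<in> {..2^n}" using P by (simp add: card_Pow)
    qed
    hence Xfin: "finite X" using finite_subset by blast
    have "Max X \<in> X" using Xfin Xne by (rule Max_in)
    then obtain Q :: "pt set" where Q: "finite Q" "card Q = n" "card (H_edges T Q \<epsilon>) = h_eps n T \<epsilon>"
      unfolding X_def h_eps_def by auto
    have hle: "h n T \<le> h_eps n T \<epsilon>" unfolding h_def using eps
      by (intro cInf_lower) auto
    define E where "E = H_edges T Q \<epsilon>"
    define x0 :: "pt \<Rightarrow> real" where "x0 = (\<lambda>_. 1 / real n)"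
    have E3: "e \<in> E \<Longrightarrow> card e = 3" for e by (auto simp: E_def H_edges_def)
    have FQ: "(\<Sum>e\<in>E. \<Prod>w\<in>e. x0 w) = real (card E) * (1 / real n)^3"
      using E3 by (simp add: x0_def)
    have Gsub: "\<And>S S'. finite S \<Longrightarrow> S' \<subseteq> S \<Longrightarrow> H_edges T S' \<epsilon> = {e\<in>H_edges T S \<epsilon>. e \<subseteq> S'}"
      by (auto simp: H_edges_def)
    have Gedge: "\<And>S e. finite S \<Longrightarrow> e \<in> H_edges T S \<epsilon> \<Longrightarrow> e \<subseteq> S"
      by (auto simp: H_edges_def)
    have x0pos: "\<forall>v\<in>Q. 0 < x0 v" using assms(2) by (simp add: x0_def)
    obtain S' x' where R: "S' \<subseteq> Q" "\<forall>v\<in>S'. 0 < x' v" "(\<Sum>v\<in>S'. x' v) = (\<Sum>v\<in>Q. x0 v)"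
      "(\<Sum>e\<in>H_edges T Q \<epsilon>. \<Prod>w\<in>e. x0 w) \<le> (\<Sum>e\<in>H_edges T S' \<epsilon>. \<Prod>w\<in>e. x' w)"
      "shadow_complete S' (H_edges T S' \<epsilon>)"
      using reduce[of "\<lambda>S. H_edges T S \<epsilon>", OF Gsub Hfin Gedge Q(1) x0pos] by blast
    have finS: "finite S'" using R(1) Q(1) finite_subset by blast
    have sum1: "(\<Sum>v\<in>S'. x' v) = 1" using R(3) Q(2) assms(2) by (simp add: x0_def)
    define LS where "LS = {(\<Sum>e\<in>H_edges T S' \<epsilon>. prod x e) | x :: pt \<Rightarrow> real.
            (\<forall>v\<in>S'. 0 \<le> x v \<and> x v \<le> 1) \<and> sum x S' = 1}"
    have lagLS: "lagrangian S' (H_edges T S' \<epsilon>) = Sup LS" unfolding lagrangian_def LS_def by simp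
    have lag: "(\<Sum>e\<in>H_edges T S' \<epsilon>. \<Prod>w\<in>e. x' w) \<le> lagrangian S' (H_edges T S' \<epsilon>)"
      unfolding lagLS
    proof (rule cSup_upper)
      have "\<forall>v\<in>S'. 0 \<le> x' v \<and> x' v \<le> 1"
      proof
        fix v assume v: "v \<in> S'"
        have "x' v \<le> (\<Sum>v\<in>S'. x' v)" using finS v R(2) by (intro member_le_sum) auto
        thus "0 \<le> x' v \<and> x' v \<le> 1" using sum1 R(2) v by auto
      qed
      thus "(\<Sum>e\<in>H_edges T S' \<epsilon>. \<Prod>w\<in>e. x' w) \<in> LS" using sum1 unfolding LS_def by blast
      show "bdd_above LS"
      proof (rule bdd_aboveI)
        fix z :: real assume "z \<in> LS"
        then obtain y :: "pt \<Rightarrow> real" where y: "z = (\<Sum>e\<in>H_edges T S' \<epsilon>. prod y e)"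
          "\<forall>v\<in>S'. 0 \<le> y v \<and> y v \<le> 1" unfolding LS_def by blast
        have "(\<Sum>e\<in>H_edges T S' \<epsilon>. prod y e) \<le> (\<Sum>e\<in>H_edges T S' \<epsilon>. 1)"
        proof (rule sum_mono)
          fix e assume "e \<in> H_edges T S' \<epsilon>"
          hence "e \<subseteq> S'" using Gedge finS by blast
          thus "prod y e \<le> 1" using y(2) by (intro prod_le_1) auto
        qed
        thus "z \<le> real (card (H_edges T S' \<epsilon>))" using y(1) by simp
      qed
    qed
    have "real (h n T) \<le> real (card E)" using hle Q(3) by (simp add: E_def)
    also have "\<dots> = real n ^ 3 * (\<Sum>e\<in>E. \<Prod>w\<in>e. x0 w)" using FQ assms(2)
      by (simp add: power_divide)
    also have "\<dots> \<le> real n ^ 3 * lagrangian S' (H_edges T S' \<epsilon>)"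
      using R(4) lag unfolding E_def by (intro mult_left_mono) auto
    finally have main: "real (h n T) \<le> real n ^ 3 * lagrangian S' (H_edges T S' \<epsilon>)" .
    have cardS: "card S' \<le> 20"
    proof (rule card_bound[OF finS pos, where \<delta> = "2*\<epsilon>*m"])
      fix u w assume uw: "u \<in> S'" "w \<in> S'" "u \<noteq> w"
      then obtain e where e: "e \<in> H_edges T S' \<epsilon>" "u \<in> e" "w \<in> e"
        using R(5) unfolding shadow_complete_def by blast
      then obtain A' B' C' where "e = {A',B',C'}" "eps_congruent (a,b,c) \<epsilon> A' B' C'"
        unfolding H_edges_def T by blast
      thus "\<exists>k\<in>{a,b,c}. \<bar>dist u w - k\<bar> \<le> 2*\<epsilon>*m"
        using eps_pair[of a b c \<epsilon> A' B' C' u w] e uw by (simp add: m_def)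
    next
      show "0 \<le> 2*\<epsilon>*m" using eps m0 by simp
    next
      have "400 * M^2 * (2*\<epsilon>*m) = 800 * M^2 * m * \<epsilon>" by simp
      also have "\<dots> < 800 * M^2 * m * e0" using eps M0 m0 by simp
      also have "\<dots> = 4/5 * m^3" using M0 by (simp add: e0_def power2_eq_square power3_eq_cube field_simps)
      also have "\<dots> < m^3" using m0 by simp
      finally show "400 * (max a (max b c))^2 * (2*\<epsilon>*m) < (min a (min b c))^3"
        by (simp add: m_def M_def)
    qed
    show "\<exists>P :: pt set. finite P \<and> card P \<le> 20 \<and>
              shadow_complete P (H_edges T P \<epsilon>) \<and>
              real (h n T) \<le> real n ^ 3 * lagrangian P (H_edges T P \<epsilon>)"
      using finS cardS R(5) main by blast
  qed
  thus ?thesis using e0pos by blast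
qed

end
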